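(* Assume Assumption A and let $(A_i,\tau_i)_{i=1}^n$ be a solution of system (S) with nonnegative initial data $\varphi_i\in X_\alpha$ satisfying $\int_{-\tau_{i0}}^0 f_i(Z_{i\varphi}(\sigma))\,d\sigma=1$ for all $i=1,\dots,n$. Then for each $i=1,\dots,n$, $\lim_{t\to+\infty}\,[t-\tau_i(t)]=+\infty$.
   Context: For $\alpha>0$, $X_\alpha:=\{\phi\in C((-\infty,0]): e^{-\alpha|\cdot|}\phi(\cdot)\in BUC((-\infty,0])\cap \mathrm{Lip}((-\infty,0])\}$. The $n$-species system (S): for $i=1,\dots,n$, $$A_i'(t)=-\mu_{A_i}A_i(t)+\beta_i e^{-\mu_{J_i}\tau_i(t)}\frac{f_i(Z_i(t))}{f_i(Z_i(t-\tau_i(t)))}A_i(t-\tau_i(t)),\quad t\ge0,$$ $$\int_{t-\tau_i(t)}^{t}f_i(Z_i(\sigma))\,d\sigma=\int_{-\tau_{i0}}^{0}f_i(Z_{i\varphi}(\sigma))\,d\sigma,\quad t\ge0,$$ with $A_i(t)=\varphi_i(t)$ for $t\le0$, $\tau_i(0)=\tau_{i0}\ge0$, where $Z_i(t)=\sum_{j=1}^n\zeta_{ij}A_j(t)$, $Z_{i\varphi}(t)=\sum_{j=1}^n\zeta_{ij}\varphi_j(t)$, $\zeta_{ij}\ge0$. A solution consists of continuous $A_i:\mathbb{R}\to[0,\infty)$, differentiable on $[0,\infty)$, and $\tau_i:[0,\infty)\to[0,\infty)$ satisfying these equations for all $t\ge0$. Assumption A: for each $i$, (i) $\mu_{A_i}>0$,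 $\mu_{J_i}>0$, $\beta_i>0$, $\zeta_{ii}>0$; (ii) $f_i:\mathbb{R}\to(0,\infty)$ is Lipschitz continuous and continuously differentiable with $f_i>0$, $f_i'\le0$ on $\mathbb{R}$, $\lim_{x\to+\infty}f_i(x)=0$, and $\sup_{x\ge0}\frac{f_i(x)}{f_i(cx)}<+\infty$ for every $c\ge1$. *)

theory Defs
  imports "HOL-Analysis.Analysis"
begin

definition X_alpha :: "real \<Rightarrow> (real \<Rightarrow> real) set" where
  "X_alpha \<alpha> = {\<phi>. continuous_on {..0} \<phi> \<and>
      bounded ((\<lambda>t. exp (- \<alpha> * \<bar>t\<bar>) * \<phi> t) ` {..0}) \<and>
      uniformly_continuous_on {..0} (\<lambda>t. exp (- \<alpha> * \<bar>t\<bar>) * \<phi> t) \<and>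
      (\<exists>L. L-lipschitz_on {..0} (\<lambda>t. exp (- \<alpha> * \<bar>t\<bar>) * \<phi> t))}"

definition assumptionA ::
  "nat \<Rightarrow> (nat \<Rightarrow> real) \<Rightarrow> (nat \<Rightarrow> real) \<Rightarrow> (nat \<Rightarrow> real) \<Rightarrow> (nat \<Rightarrow> nat \<Rightarrow> real)
   \<Rightarrow> (nat \<Rightarrow> real \<Rightarrow> real) \<Rightarrow> bool" where
  "assumptionA n muA muJ \<beta> \<zeta> f \<longleftrightarrow>
     (\<forall>i<n. \<forall>j<n. \<zeta> i j \<ge> 0) \<and>
     (\<forall>i<n. muA i > 0 \<and> muJ i > 0 \<and> \<beta> i > 0 \<and> \<zeta> i i > 0 \<and>
        (\<exists>L. L-lipschitz_on UNIV (f i)) \<and>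
        (\<exists>f'. (\<forall>x. (f i has_real_derivative f' x) (at x)) \<and> continuous_on UNIV f' \<and>
              (\<forall>x. f' x \<le> 0)) \<and>
        (\<forall>x. f i x > 0) \<and>
        (f i \<longlongrightarrow> 0) at_top \<and>
        (\<forall>c\<ge>1. bdd_above ((\<lambda>x. f i x / f i (c * x)) ` {0..})))"

definition Zfun :: "nat \<Rightarrow> (nat \<Rightarrow> nat \<Rightarrow> real) \<Rightarrow> (nat \<Rightarrow> real \<Rightarrow> real) \<Rightarrow> nat \<Rightarrow> real \<Rightarrow> real" where
  "Zfun n \<zeta> A i t = (\<Sum>j<n. \<zeta> i j * A j t)"

definition is_solution ::
  "nat \<Rightarrow> (nat \<Rightarrow> real) \<Rightarrow> (nat \<Rightarrow> real) \<Rightarrow> (nat \<Rightarrow> real) \<Rightarrow> (nat \<Rightarrow> nat \<Rightarrow> real)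
   \<Rightarrow> (nat \<Rightarrow> real \<Rightarrow> real) \<Rightarrow> (nat \<Rightarrow> real \<Rightarrow> real) \<Rightarrow> (nat \<Rightarrow> real)
   \<Rightarrow> (nat \<Rightarrow> real \<Rightarrow> real) \<Rightarrow> (nat \<Rightarrow> real \<Rightarrow> real) \<Rightarrow> bool" where
  "is_solution n muA muJ \<beta> \<zeta> f \<phi> \<tau>0 A \<tau> \<longleftrightarrow>
     (\<forall>i<n.
        continuous_on UNIV (A i) \<and> (\<forall>t. A i t \<ge> 0) \<and>
        (\<forall>t\<le>0. A i t = \<phi> i t) \<and>
        \<tau> i 0 = \<tau>0 i \<and> (\<forall>t\<ge>0. \<tau> i t \<ge> 0) \<and>
        (\<forall>t\<ge>0. (A i has_real_derivative
             (- muA i * A i t + \<beta> i * exp (- muJ i * \<tau> i t) *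
                (f i (Zfun n \<zeta> A i t) / f i (Zfun n \<zeta> A i (t - \<tau> i t))) * A i (t - \<tau> i t)))
           (at t within {0..})) \<and>
        (\<forall>t\<ge>0. integral {t - \<tau> i t..t} (\<lambda>\<sigma>. f i (Zfun n \<zeta> A i \<sigma>)) =
                 integral {- \<tau>0 i..0} (\<lambda>\<sigma>. f i (Zfun n \<zeta> \<phi> i \<sigma>))))"

end

theory Submission
  imports Defs
begin


lemma deriv_shift_inv:
  fixes G s :: "real \<Rightarrow> real"
  assumes dG1: "DERIV G t :> h1" and dG2: "DERIV G (s t) :> h2" and h2: "h2 \<noteq> 0"
    and cs: "isCont s t"
    and ev: "\<forall>\<^sub>F y in nhds t. G (s y) - G (s t) = G y - G t"
  shows "DERIV s t :> h1 / h2"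
proof -
  obtain r where r: "\<forall>z. G z - G t = r z * (z - t)" "isCont r t" "r t = h1"
    using dG1 CARAT_DERIV by blast
  obtain g where g: "\<forall>z. G z - G (s t) = g z * (z - s t)" "isCont g (s t)" "g (s t) = h2"
    using dG2 CARAT_DERIV by blast
  have cgs: "isCont (\<lambda>y. g (s y)) t" using cs g(2) by (rule isCont_o2)
  hence "\<forall>\<^sub>F y in nhds t. g (s y) \<noteq> 0"
    using g(3) h2 cgs unfolding eventually_nhds_conv_at by (simp add: isCont_def tendsto_imp_eventually_ne)
  define R where "R y = r y / g (s y)" for y
  have ev2: "\<forall>\<^sub>F y in nhds t. s y = s t + R y * (y - t)"
    using ev \<open>\<forall>\<^sub>F y in nhds t. g (s y) \<noteq> 0\<close>
  proof eventually_elim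
    case (elim y)
    have "g (s y) * (s y - s t) = r y * (y - t)" using elim(1) g(1) r(1) by metis
    then show ?case using elim(2) unfolding R_def by (simp add: field_simps)
  qed
  have "isCont R t" unfolding R_def using r(2) cgs g(3) h2 by (intro isCont_divide) auto
  hence "DERIV (\<lambda>y. s t + R y * (y - t)) t :> R t"
    by (subst CARAT_DERIV) (auto intro!: exI[of _ R])
  moreover have "R t = h1 / h2" using R_def r(3) g(3) by simp
  ultimately show ?thesis using ev2 DERIV_cong_ev[of t t s "\<lambda>y. s t + R y * (y - t)"] by auto
qed




lemma int_bounds:
  fixes h :: "real \<Rightarrow> real"
  assumes hc: "continuous_on UNIV h" and xy: "x \<le> y"
    and b: "\<And>z. z \<in> {x..y} \<Longrightarrow> c1 \<le> h z \<and> h z \<le> c2"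
  shows "c1 * (y - x) \<le> integral {x..y} h \<and> integral {x..y} h \<le> c2 * (y - x)"
proof -
  have hi: "h integrable_on {x..y}"
    using hc by (intro integrable_continuous_interval) (auto intro: continuous_on_subset)
  have "integral {x..y} (\<lambda>_. c1) \<le> integral {x..y} h"
    using b by (intro integral_le hi) auto
  moreover have "integral {x..y} h \<le> integral {x..y} (\<lambda>_. c2)"
    using b by (intro integral_le hi) auto
  ultimately show ?thesis using xy by (simp add: mult.commute)
qed

lemma int_lower:
  fixes h :: "real \<Rightarrow> real"
  assumes hc: "continuous_on UNIV h" and xy: "x \<le> y"
    and b: "\<And>z. z \<in> {x..y} \<Longrightarrow> c1 \<le> h z"
  shows "c1 * (y - x) \<le> integral {x..y} h"
proof -
  have hi: "h integrable_on {x..y}"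
    using hc by (intro integrable_continuous_interval) (auto intro: continuous_on_subset)
  have "integral {x..y} (\<lambda>_. c1) \<le> integral {x..y} h"
    using b by (intro integral_le hi) auto
  thus ?thesis using xy by (simp add: mult.commute)
qed

lemma int_upper:
  fixes h :: "real \<Rightarrow> real"
  assumes hc: "continuous_on UNIV h" and xy: "x \<le> y"
    and b: "\<And>z. z \<in> {x..y} \<Longrightarrow> h z \<le> c2"
  shows "integral {x..y} h \<le> c2 * (y - x)"
proof -
  have hi: "h integrable_on {x..y}"
    using hc by (intro integrable_continuous_interval) (auto intro: continuous_on_subset)
  have "integral {x..y} h \<le> integral {x..y} (\<lambda>_. c2)"
    using b by (intro integral_le hi) auto
  thus ?thesis using xy by (simp add: mult.commute)
qed

lemma int_pos:
  fixes h :: "real \<Rightarrow> real"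
  assumes hc: "continuous_on UNIV h" and hp: "\<And>x. h x > 0" and xy: "x < y"
  shows "integral {x..y} h > 0"
proof -
  have "continuous_on {x..y} h" by (rule continuous_on_subset[OF hc]) auto
  then obtain z where z: "z \<in> {x..y}" "\<And>w. w \<in> {x..y} \<Longrightarrow> h z \<le> h w"
    using continuous_attains_inf[of "{x..y}" h] xy by fastforce
  have "integral {x..y} (\<lambda>_. h z) \<le> integral {x..y} h"
    using z hc by (intro integral_le integrable_continuous_interval) (auto intro: continuous_on_subset)
  hence "h z * (y - x) \<le> integral {x..y} h" using xy by (simp add: mult.commute)
  moreover have "h z * (y - x) > 0" using hp[of z] xy by simp
  ultimately show ?thesis by linarith
qed

lemma int_nonneg:
  fixes h :: "real \<Rightarrow> real"
  assumes hc: "continuous_on UNIV h" and hp: "\<And>x. h x \<ge> 0"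
  shows "integral {x..y} h \<ge> 0"
  using hc hp by (intro integral_nonneg integrable_continuous_interval) (auto intro: continuous_on_subset)

lemma int_combine:
  fixes h :: "real \<Rightarrow> real"
  assumes hc: "continuous_on UNIV h" and "a \<le> c" "c \<le> b"
  shows "integral {a..c} h + integral {c..b} h = integral {a..b} h"
  by (rule Henstock_Kurzweil_Integration.integral_combine) (use assms in \<open>auto intro: continuous_on_subset integrable_continuous_interval\<close>)

lemma int_deriv:
  fixes h :: "real \<Rightarrow> real"
  assumes hc: "continuous_on UNIV h" and "b < x"
  shows "DERIV (\<lambda>x. integral {b..x} h) x :> h x"
proof -
  have "((\<lambda>x. integral {b..x} h) has_real_derivative h x) (at x within {b..x+1})"
    using assms by (intro integral_has_real_derivative) (auto intro: continuous_on_subset)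
  moreover have "at x within {b..x+1} = at x" using assms by (intro at_within_Icc_at) auto
  ultimately show ?thesis by simp
qed




lemma delay_facts:
  fixes h s :: "real \<Rightarrow> real" and r :: real
  assumes hc: "continuous_on UNIV h" and hp: "\<And>x. h x > 0" and r: "r \<ge> 0"
    and int0: "integral {-r..0} h = 1"
    and st: "\<And>t. t \<ge> 0 \<Longrightarrow> s t \<le> t \<and> integral {s t..t} h = 1"
  shows "\<And>t. t \<ge> 0 \<Longrightarrow> s t \<ge> -r"
    and "\<And>T. continuous_on {0..T} s"
    and "\<And>t. t > 0 \<Longrightarrow> DERIV s t :> h t / h (s t)"
proof -
  show lo: "s t \<ge> -r" if t: "t \<ge> 0" for t
  proof (rule ccontr)
    assume "\<not> ?thesis" hence lt: "s t < -r" by simp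
    have "integral {s t..-r} h + integral {-r..t} h = integral {s t..t} h"
      using lt r t by (intro int_combine hc) auto
    moreover have "integral {-r..0} h + integral {0..t} h = integral {-r..t} h"
      using r t by (intro int_combine hc) auto
    moreover have "integral {0..t} h \<ge> 0" using hc hp by (intro int_nonneg) (auto intro: less_imp_le)
    moreover have "integral {s t..-r} h > 0" using lt by (intro int_pos hc hp)
    ultimately show False using st[OF t] int0 by linarith
  qed
  define b where "b = -r - 1"
  define G where "G x = integral {b..x} h" for x
  have Gdiff: "G v - G u = integral {u..v} h" if "b \<le> u" "u \<le> v" for u v
    using int_combine[OF hc, of b u v] that unfolding G_def by linarith
  have Grel: "G t - G (s t) = 1" if "t \<ge> 0" for t
    using Gdiff[of "s t" t] lo[OF that] st[OF that] unfolding b_def by auto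
  have Gder: "DERIV G x :> h x" if "x > b" for x
    unfolding G_def using int_deriv[OF hc that] .
  show cont: "continuous_on {0..T} s" for T
  proof (cases "T \<ge> 0")
    case False thus ?thesis by simp
  next
    case T: True
    obtain m where m: "m > 0" "\<And>z. z \<in> {-r..T} \<Longrightarrow> m \<le> h z"
    proof -
      have "continuous_on {-r..T} h" by (rule continuous_on_subset[OF hc]) auto
      then obtain z where z: "z \<in> {-r..T}" "\<And>w. w \<in> {-r..T} \<Longrightarrow> h z \<le> h w"
        using continuous_attains_inf[of "{-r..T}" h] T r by fastforce
      show ?thesis using z hp[of z] by (intro that[of "h z"]) auto
    qed
    obtain M where M: "\<And>z. z \<in> {0..T} \<Longrightarrow> h z \<le> M"
    proof -
      have "bounded (h ` {0..T})" using hc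
        by (intro compact_imp_bounded compact_continuous_image) (auto intro: continuous_on_subset)
      then obtain B where "\<And>z. z \<in> {0..T} \<Longrightarrow> norm (h z) \<le> B"
        unfolding bounded_iff by blast
      hence "\<And>z. z \<in> {0..T} \<Longrightarrow> h z \<le> B" by (metis abs_le_D1 real_norm_def)
      thus ?thesis using that[of B] by blast
    qed
    have Glow: "m * \<bar>u - v\<bar> \<le> \<bar>G u - G v\<bar>" if "u \<in> {-r..T}" "v \<in> {-r..T}" for u v
    proof -
      have *: "m * (y - x) \<le> G y - G x" if "x \<in> {-r..T}" "y \<in> {-r..T}" "x \<le> y" for x y
      proof -
        have "m * (y - x) \<le> integral {x..y} h"
          using that m(2) by (intro int_lower hc) auto
        moreover have "G y - G x = integral {x..y} h" by (rule Gdiff) (use that in \<open>auto simp: b_def\<close>)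
        ultimately show ?thesis by simp
      qed
      show ?thesis using *[of u v] *[of v u] that by (cases "u \<le> v") (auto simp: abs_if)
    qed
    have Gup: "\<bar>G u - G v\<bar> \<le> M * \<bar>u - v\<bar>" if "u \<in> {0..T}" "v \<in> {0..T}" for u v
    proof -
      have *: "G y - G x \<le> M * (y - x)" if "x \<in> {0..T}" "y \<in> {0..T}" "x \<le> y" for x y
      proof -
        have "integral {x..y} h \<le> M * (y - x)"
          using that M by (intro int_upper hc) auto
        moreover have "G y - G x = integral {x..y} h" by (rule Gdiff) (use that r in \<open>auto simp: b_def\<close>)
        ultimately show ?thesis by simp
      qed
      have mono: "G y - G x \<ge> 0" if "x \<in> {0..T}" "y \<in> {0..T}" "x \<le> y" for x y
      proof -
        have "integral {x..y} h \<ge> 0" using hc hp by (intro int_nonneg) (auto intro: less_imp_le)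
        moreover have "G y - G x = integral {x..y} h" by (rule Gdiff) (use that r in \<open>auto simp: b_def\<close>)
        ultimately show ?thesis by simp
      qed
      show ?thesis using *[of u v] *[of v u] mono[of u v] mono[of v u] that
        by (cases "u \<le> v") (auto simp: abs_if)
    qed
    have sT: "s u \<in> {-r..T}" if "u \<in> {0..T}" for u
      using lo[of u] st[of u] that by auto
    have "(M / m)-lipschitz_on {0..T} s"
    proof (rule lipschitz_onI)
      fix u v assume uv: "u \<in> {0..T}" "v \<in> {0..T}"
      have "m * \<bar>s u - s v\<bar> \<le> \<bar>G (s u) - G (s v)\<bar>" using Glow sT uv by auto
      also have "G (s u) - G (s v) = G u - G v" using Grel[of u] Grel[of v] uv by auto
      also have "\<bar>G u - G v\<bar> \<le> M * \<bar>u - v\<bar>" using Gup uv by auto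
      finally have "\<bar>s u - s v\<bar> \<le> (M / m) * \<bar>u - v\<bar>" using m(1) by (simp add: field_simps)
      thus "dist (s u) (s v) \<le> (M / m) * dist u v" by (simp add: dist_real_def)
    next
      have "0 \<le> m * 0" by simp
      have "M \<ge> h 0" using M T by auto
      thus "0 \<le> M / m" using hp[of 0] m(1) by simp
    qed
    thus ?thesis by (rule lipschitz_on_continuous_on)
  qed
  show "DERIV s t :> h t / h (s t)" if t: "t > 0" for t
  proof (rule deriv_shift_inv)
    show "DERIV G t :> h t" by (rule Gder) (use t r in \<open>simp add: b_def\<close>)
    show "DERIV G (s t) :> h (s t)" by (rule Gder) (use t lo[of t] in \<open>simp add: b_def\<close>)
    show "h (s t) \<noteq> 0" using hp[of "s t"] by simp
    have "continuous_on {0..t+1} s" by (rule cont)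
    thus "isCont s t" using t by (intro continuous_on_interior[of "{0..t+1}"]) auto
    have "\<forall>\<^sub>F y in nhds t. y \<in> {0<..}" using t by (intro eventually_nhds_in_open) auto
    thus "\<forall>\<^sub>F y in nhds t. G (s y) - G (s t) = G y - G t"
    proof eventually_elim
      case (elim y)
      have "G y - G (s y) = 1" "G t - G (s t) = 1" using Grel elim t by auto
      thus ?case by linarith
    qed
  qed
qed




lemma integral_growth:
  fixes A h s :: "real \<Rightarrow> real" and \<mu> \<beta> \<mu>J a r :: real
  assumes Ac: "continuous_on UNIV A" and Anon: "\<And>x. A x \<ge> 0" and r: "r \<ge> 0"
    and slo: "\<And>t. t \<ge> 0 \<Longrightarrow> s t \<ge> -r \<and> s t \<le> t"
    and scont: "\<And>T. continuous_on {0..T} s"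
    and sder: "\<And>t. t > 0 \<Longrightarrow> DERIV s t :> h t / h (s t)"
    and hp: "\<And>x. h x > 0"
    and Ader: "\<And>t. t > 0 \<Longrightarrow> DERIV A t :>
        (- \<mu> * A t + \<beta> * exp (- \<mu>J * (t - s t)) * (h t / h (s t)) * A (s t))"
    and thr: "\<And>t. t \<ge> 0 \<Longrightarrow> a \<le> A (s t) \<Longrightarrow> \<beta> * exp (- \<mu>J * (t - s t)) \<le> \<mu> / 2"
    and mu: "\<mu> > 0" and beta: "\<beta> > 0" and a: "a \<ge> 0" and muJ: "\<mu>J \<ge> 0"
  shows "\<exists>C. \<forall>T\<ge>0. integral {0..T} A \<le> C * (1 + T)"
proof -
  define b where "b = -r - 1"
  define \<Psi> where "\<Psi> x = integral {b..x} A" for x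
  define W where "W t = A t + \<mu> * \<Psi> t - \<mu> / 2 * \<Psi> (s t) - \<beta> * a * s t" for t
  have Psid: "DERIV \<Psi> x :> A x" if "x > b" for x
    unfolding \<Psi>_def using int_deriv[OF Ac that] .
  have Psidiff: "\<Psi> v - \<Psi> u = integral {u..v} A" if "b \<le> u" "u \<le> v" for u v
    using int_combine[OF Ac, of b u v] that unfolding \<Psi>_def by linarith
  have Psicont: "continuous_on {b<..} \<Psi>"
    by (intro continuous_at_imp_continuous_on ballI DERIV_isCont) (use Psid in auto)
  have Wdec: "W T \<le> W 0" if T: "T \<ge> 0" for T
  proof (rule DERIV_nonpos_imp_decreasing_open[OF T])
    fix x assume x: "0 < x" "x < T"
    define q where "q = h x / h (s x)"
    define e where "e = exp (- \<mu>J * (x - s x))"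
    have q: "q > 0" unfolding q_def using hp by (simp add: divide_pos_pos)
    have sx: "s x \<ge> -r" "s x \<le> x" using slo[of x] x by auto
    have d: "DERIV W x :> ((- \<mu> * A x + \<beta> * e * q * A (s x)) + \<mu> * A x
              - \<mu> / 2 * (A (s x) * q) - \<beta> * a * q)"
      unfolding W_def[abs_def] e_def q_def
      apply (intro DERIV_diff DERIV_add DERIV_cmult Ader x)
        apply (rule Psid) using x r apply (simp add: b_def)
       apply (rule DERIV_chain2[of \<Psi>]) apply (rule Psid) using sx r apply (simp add: b_def)
       apply (rule sder, rule x)
      apply (rule sder, rule x)
      done
    have e1: "e \<le> 1" unfolding e_def using sx muJ by (simp add: mult_nonneg_nonneg)
    have br: "\<beta> * e * A (s x) - \<mu> / 2 * A (s x) - \<beta> * a \<le> 0"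
    proof (cases "a \<le> A (s x)")
      case True
      have "\<beta> * e \<le> \<mu> / 2" using thr[of x] True x unfolding e_def by auto
      hence "\<beta> * e * A (s x) \<le> \<mu> / 2 * A (s x)" using Anon by (intro mult_right_mono) auto
      moreover have "\<beta> * a \<ge> 0" using beta a by simp
      ultimately show ?thesis by linarith
    next
      case False
      have "\<beta> * e * A (s x) \<le> \<beta> * 1 * a"
        using False e1 beta Anon[of "s x"] unfolding e_def
        by (intro mult_mono) (auto intro: mult_left_mono)
      moreover have "\<mu> / 2 * A (s x) \<ge> 0" using mu Anon by simp
      ultimately show ?thesis by simp
    qed
    have "((- \<mu> * A x + \<beta> * e * q * A (s x)) + \<mu> * A x
              - \<mu> / 2 * (A (s x) * q) - \<beta> * a * q) = q * (\<beta> * e * A (s x) - \<mu> / 2 * A (s x) - \<beta> * a)"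
      by (simp add: algebra_simps)
    also have "\<dots> \<le> 0" using q br by (simp add: mult_nonneg_nonpos)
    finally show "\<exists>y. DERIV W x :> y \<and> y \<le> 0" using d by blast
  next
    have sT: "s ` {0..T} \<subseteq> {b<..}" using slo r by (force simp: b_def)
    have "continuous_on {0..T} (\<lambda>t. \<Psi> (s t))"
      by (rule continuous_on_compose2[OF Psicont scont sT])
    moreover have "continuous_on {0..T} \<Psi>" using r by (intro continuous_on_subset[OF Psicont]) (auto simp: b_def)
    ultimately show "continuous_on {0..T} W" unfolding W_def[abs_def]
      by (intro continuous_intros continuous_on_subset[OF Ac] scont) auto
  qed
  define C where "C = 2 / \<mu> * (\<bar>W 0\<bar> + \<beta> * a)"
  show ?thesis
  proof (intro exI allI impI)
    fix T :: real assume T: "T \<ge> 0"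
    have sT: "s T \<ge> -r" "s T \<le> T" using slo[OF T] by auto
    have i1: "integral {0..T} A = \<Psi> T - \<Psi> 0" using Psidiff[of 0 T] T r by (simp add: b_def)
    have i2: "\<Psi> (s T) \<le> \<Psi> T" using Psidiff[of "s T" T] sT r int_nonneg[OF Ac Anon, of "s T" T]
      by (simp add: b_def)
    have i3: "\<Psi> 0 \<ge> 0" unfolding \<Psi>_def by (rule int_nonneg[OF Ac Anon])
    have "W T \<le> W 0" by (rule Wdec[OF T])
    hence "A T + \<mu> * \<Psi> T - \<mu> / 2 * \<Psi> (s T) - \<beta> * a * s T \<le> W 0" unfolding W_def by simp
    moreover have "\<mu> / 2 * \<Psi> (s T) \<le> \<mu> / 2 * \<Psi> T" using i2 mu by simp
    moreover have "\<beta> * a * s T \<le> \<beta> * a * T" using sT beta a by (intro mult_left_mono) auto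
    ultimately have "\<mu> / 2 * \<Psi> T \<le> W 0 + \<beta> * a * T" using Anon[of T] by linarith
    hence "\<Psi> T \<le> 2 / \<mu> * (W 0 + \<beta> * a * T)" using mu by (simp add: field_simps)
    also have "\<dots> \<le> C * (1 + T)"
    proof -
      have ba: "\<beta> * a \<ge> 0" using beta a by simp
      have "\<bar>W 0\<bar> * T \<ge> 0" using T by simp
      hence "W 0 + \<beta> * a * T \<le> (\<bar>W 0\<bar> + \<beta> * a) * (1 + T)"
        using ba by (simp add: algebra_simps)
      hence "2 / \<mu> * (W 0 + \<beta> * a * T) \<le> 2 / \<mu> * ((\<bar>W 0\<bar> + \<beta> * a) * (1 + T))"
        using mu by (intro mult_left_mono) auto
      thus ?thesis unfolding C_def by (simp only: mult.assoc)
    qed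
    finally show "integral {0..T} A \<le> C * (1 + T)" using i1 i3 by linarith
  qed
qed




lemma exp_lower:
  fixes A :: "real \<Rightarrow> real" and \<mu> :: real
  assumes Ac: "continuous_on UNIV A"
    and Ad: "\<And>t. t > 0 \<Longrightarrow> \<exists>d. DERIV A t :> d \<and> d \<ge> - \<mu> * A t"
    and u: "0 \<le> u" "u \<le> v"
  shows "A v \<ge> A u * exp (- \<mu> * (v - u))"
proof -
  define q where "q x = A x * exp (\<mu> * x)" for x
  have "q u \<le> q v"
  proof (rule DERIV_nonneg_imp_increasing_open[OF u(2)])
    fix x assume x: "u < x" "x < v"
    then obtain d where d: "DERIV A x :> d" "d \<ge> - \<mu> * A x" using Ad[of x] x u by auto
    have "DERIV q x :> d * exp (\<mu> * x) + (exp (\<mu> * x) * \<mu>) * A x"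
      unfolding q_def[abs_def] by (rule DERIV_mult[OF d(1) DERIV_chain2[OF DERIV_exp DERIV_cmult_Id]])
    moreover have "d * exp (\<mu> * x) + (exp (\<mu> * x) * \<mu>) * A x = (d + \<mu> * A x) * exp (\<mu> * x)"
      by (simp add: algebra_simps)
    moreover have "(d + \<mu> * A x) * exp (\<mu> * x) \<ge> 0"
    proof -
      have "d + \<mu> * A x \<ge> 0" using d(2) by linarith
      thus ?thesis by (intro mult_nonneg_nonneg) auto
    qed
    ultimately show "\<exists>y. DERIV q x :> y \<and> 0 \<le> y" by metis
  next
    show "continuous_on {u..v} q" unfolding q_def[abs_def]
      by (intro continuous_intros continuous_on_subset[OF Ac]) auto
  qed
  hence le: "A u * exp (\<mu> * u) \<le> A v * exp (\<mu> * v)" unfolding q_def .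
  have "A u * exp (\<mu> * u) / exp (\<mu> * v) \<le> A v"
    by (subst pos_divide_le_eq) (use le in auto)
  moreover have "exp (\<mu> * u) / exp (\<mu> * v) = exp (- \<mu> * (v - u))"
  proof -
    have "\<mu> * u - \<mu> * v = - \<mu> * (v - u)" by (simp add: algebra_simps)
    thus ?thesis by (simp add: exp_diff[symmetric])
  qed
  ultimately show ?thesis by (metis times_divide_eq_right)
qed




lemma threshold:
  fixes A Z s f :: "real \<Rightarrow> real" and \<mu> \<beta> \<mu>J zz r :: real
  assumes fc: "continuous_on UNIV (\<lambda>\<sigma>. f (Z \<sigma>))" and f0: "(f \<longlongrightarrow> 0) at_top"
    and zz: "zz > 0" and ZA: "\<And>\<sigma>. Z \<sigma> \<ge> zz * A \<sigma>"
    and Ac: "continuous_on UNIV A" and Anon: "\<And>x. A x \<ge> 0"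
    and Ad: "\<And>t. t > 0 \<Longrightarrow> \<exists>d. DERIV A t :> d \<and> d \<ge> - \<mu> * A t"
    and st: "\<And>t. t \<ge> 0 \<Longrightarrow> -r \<le> s t \<and> s t \<le> t \<and> integral {s t..t} (\<lambda>\<sigma>. f (Z \<sigma>)) = 1"
    and mu: "\<mu> > 0" and beta: "\<beta> > 0" and muJ: "\<mu>J > 0"
  shows "\<exists>a\<ge>0. \<forall>t\<ge>0. a \<le> A (s t) \<longrightarrow> \<beta> * exp (- \<mu>J * (t - s t)) \<le> \<mu> / 2"
proof -
  define T where "T = max 1 (ln (2 * \<beta> / \<mu>) / \<mu>J)"
  have T1: "T \<ge> 1" unfolding T_def by simp
  have Tb: "\<beta> * exp (- \<mu>J * \<tau>) \<le> \<mu> / 2" if "\<tau> \<ge> T" for \<tau>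
  proof -
    have "ln (2 * \<beta> / \<mu>) / \<mu>J \<le> \<tau>" using that unfolding T_def by simp
    hence "ln (2 * \<beta> / \<mu>) \<le> \<mu>J * \<tau>" using muJ by (metis pos_divide_le_eq mult.commute)
    hence "exp (- \<mu>J * \<tau>) \<le> exp (- ln (2 * \<beta> / \<mu>))" by simp
    also have "\<dots> = \<mu> / (2 * \<beta>)" using beta mu by (simp add: exp_minus)
    finally show ?thesis using beta by (simp add: field_simps)
  qed
  have "\<forall>\<^sub>F x in at_top. f x < 1 / T" using f0 T1 by (intro order_tendstoD) auto
  then obtain X where X: "\<And>x. x \<ge> X \<Longrightarrow> f x < 1 / T" unfolding eventually_at_top_linorder by blast
  obtain B where B: "\<And>x. x \<in> {-r..0} \<Longrightarrow> A x \<le> B"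
  proof -
    have "bounded (A ` {-r..0})" using Ac
      by (intro compact_imp_bounded compact_continuous_image) (auto intro: continuous_on_subset)
    then obtain B where "\<And>z. z \<in> {-r..0} \<Longrightarrow> norm (A z) \<le> B"
      unfolding bounded_iff by blast
    hence "\<And>z. z \<in> {-r..0} \<Longrightarrow> A z \<le> B" by (metis abs_le_D1 real_norm_def)
    thus ?thesis using that[of B] by blast
  qed
  define a where "a = max (max B 0 + 1) (max X 0 * exp (\<mu> * T) / zz)"
  show ?thesis
  proof (intro exI[of _ a] conjI allI impI)
    show "a \<ge> 0" unfolding a_def by simp
    fix t :: real assume t: "t \<ge> 0" and aA: "a \<le> A (s t)"
    have s: "-r \<le> s t" "s t \<le> t" "integral {s t..t} (\<lambda>\<sigma>. f (Z \<sigma>)) = 1" using st[OF t] by auto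
    have spos: "s t > 0"
    proof (rule ccontr)
      assume "\<not> ?thesis"
      hence "A (s t) \<le> B" using B s by auto
      thus False using aA unfolding a_def by linarith
    qed
    have "t - s t \<ge> T"
    proof (rule ccontr)
      assume "\<not> ?thesis" hence lt: "t - s t < T" by simp
      have "f (Z \<sigma>) \<le> 1 / T" if \<sigma>: "\<sigma> \<in> {s t..t}" for \<sigma>
      proof -
        have "A \<sigma> \<ge> A (s t) * exp (- \<mu> * (\<sigma> - s t))"
          using \<sigma> spos by (intro exp_lower[OF Ac Ad]) auto
        moreover have "exp (- \<mu> * (\<sigma> - s t)) \<ge> exp (- \<mu> * T)" using \<sigma> lt mu by simp
        moreover have "A (s t) \<ge> a" by (rule aA)
        moreover have "a \<ge> 0" unfolding a_def by simp
        ultimately have "a * exp (- \<mu> * T) \<le> A (s t) * exp (- \<mu> * (\<sigma> - s t))"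
          by (intro mult_mono) (use Anon in auto)
        hence "A \<sigma> \<ge> a * exp (- \<mu> * T)" using \<open>A \<sigma> \<ge> A (s t) * exp (- \<mu> * (\<sigma> - s t))\<close> by linarith
        hence "zz * A \<sigma> \<ge> zz * (a * exp (- \<mu> * T))" using zz by simp
        moreover have "zz * (a * exp (- \<mu> * T)) \<ge> max X 0"
        proof -
          have "a \<ge> max X 0 * exp (\<mu> * T) / zz" unfolding a_def by simp
          hence "zz * a \<ge> max X 0 * exp (\<mu> * T)" using zz by (simp add: field_simps)
          hence "zz * a * exp (- \<mu> * T) \<ge> max X 0 * exp (\<mu> * T) * exp (- \<mu> * T)"
            by (intro mult_right_mono) auto
          moreover have "exp (\<mu> * T) * exp (- \<mu> * T) = 1" by (simp add: exp_minus)
          ultimately have "zz * a * exp (- \<mu> * T) \<ge> max X 0" by (metis mult.assoc mult_1_right)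
          thus ?thesis by (simp only: mult.assoc)
        qed
        ultimately have "Z \<sigma> \<ge> X" using ZA[of \<sigma>] by linarith
        thus ?thesis using X by (simp add: less_imp_le)
      qed
      hence "integral {s t..t} (\<lambda>\<sigma>. f (Z \<sigma>)) \<le> 1 / T * (t - s t)"
        using s by (intro int_upper fc) auto
      also have "\<dots> < 1" using lt T1 by (simp add: field_simps)
      finally show False using s by simp
    qed
    thus "\<beta> * exp (- \<mu>J * (t - s t)) \<le> \<mu> / 2" by (rule Tb)
  qed
qed




lemma final_step:
  fixes f Z s :: "real \<Rightarrow> real" and C :: real
  assumes fdec: "\<And>x y. x \<le> y \<Longrightarrow> f y \<le> f x" and fpos: "\<And>x. f x > 0"
    and hc: "continuous_on UNIV (\<lambda>\<sigma>. f (Z \<sigma>))" and Zc: "continuous_on UNIV Z"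
    and Znon: "\<And>x. Z x \<ge> 0"
    and Zint: "\<And>T. T \<ge> 0 \<Longrightarrow> integral {0..T} Z \<le> C * (1 + T)"
    and st: "\<And>t. t \<ge> 0 \<Longrightarrow> s t \<le> t \<and> integral {s t..t} (\<lambda>\<sigma>. f (Z \<sigma>)) = 1"
  shows "filterlim s at_top at_top"
proof -
  define K where "K = 2 * \<bar>C\<bar> + 1"
  define fK where "fK = f K"
  have K: "K > 0" unfolding K_def by simp
  have fK: "fK > 0" unfolding fK_def by (rule fpos)
  have hpos: "\<And>x. f (Z x) > 0" by (rule fpos)
  have lowint: "integral {0..T} (\<lambda>\<sigma>. f (Z \<sigma>)) \<ge> fK * (T - 1) / 2" if T: "T \<ge> 0" for T
  proof -
    have pw: "fK - fK / K * Z \<sigma> \<le> f (Z \<sigma>)" for \<sigma>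
    proof (cases "Z \<sigma> \<le> K")
      case True
      hence "fK \<le> f (Z \<sigma>)" unfolding fK_def by (rule fdec)
      moreover have "fK / K * Z \<sigma> \<ge> 0" using fK K Znon[of \<sigma>] by simp
      ultimately show ?thesis by linarith
    next
      case False
      hence "fK / K * Z \<sigma> \<ge> fK / K * K" using fK K by (intro mult_left_mono) auto
      hence "fK / K * Z \<sigma> \<ge> fK" using K by simp
      thus ?thesis using hpos[of \<sigma>] by linarith
    qed
    have Zi: "Z integrable_on {0..T}"
      by (rule integrable_continuous_interval, rule continuous_on_subset[OF Zc]) auto
    have hi: "(\<lambda>\<sigma>. f (Z \<sigma>)) integrable_on {0..T}"
      by (rule integrable_continuous_interval, rule continuous_on_subset[OF hc]) auto
    have li: "(\<lambda>\<sigma>. fK - fK / K * Z \<sigma>) integrable_on {0..T}"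
      by (intro integrable_diff integrable_const_ivl) (use integrable_on_cmult_left[OF Zi, of "fK / K"] in simp)
    have "integral {0..T} (\<lambda>\<sigma>. fK - fK / K * Z \<sigma>) = fK * T - fK / K * integral {0..T} Z"
    proof -
      have Zi2: "(\<lambda>\<sigma>. fK / K * Z \<sigma>) integrable_on {0..T}"
        using integrable_on_cmult_left[OF Zi, of "fK / K"] by simp
      have "integral {0..T} (\<lambda>\<sigma>. fK - fK / K * Z \<sigma>)
          = integral {0..T} (\<lambda>\<sigma>. fK) - integral {0..T} (\<lambda>\<sigma>. fK / K * Z \<sigma>)"
        by (rule integral_diff[OF integrable_const_ivl Zi2])
      moreover have "integral {0..T} (\<lambda>\<sigma>. fK / K * Z \<sigma>) = fK / K * integral {0..T} Z"
        by (rule integral_mult_right)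
      ultimately show ?thesis using T by (simp add: mult.commute)
    qed
    moreover have "integral {0..T} (\<lambda>\<sigma>. fK - fK / K * Z \<sigma>) \<le> integral {0..T} (\<lambda>\<sigma>. f (Z \<sigma>))"
      using pw by (intro integral_le li hi) auto
    moreover have "fK / K * integral {0..T} Z \<le> fK * (1 + T) / 2"
    proof -
      have "integral {0..T} Z \<le> \<bar>C\<bar> * (1 + T)"
        using Zint[OF T] T by (smt (verit, best) abs_ge_self mult_right_mono)
      hence "fK / K * integral {0..T} Z \<le> fK / K * (\<bar>C\<bar> * (1 + T))"
        using fK K by (intro mult_left_mono) auto
      also have "\<dots> = fK * (1 + T) * (\<bar>C\<bar> / K)" by (simp add: field_simps)
      also have "\<dots> \<le> fK * (1 + T) * (1 / 2)"
        using K fK T unfolding K_def by (intro mult_left_mono) (auto simp: field_simps)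
      finally show ?thesis by simp
    qed
    moreover have "fK * (T - 1) / 2 = fK * T - fK * (1 + T) / 2" by (simp add: field_simps)
    ultimately show ?thesis by linarith
  qed
  show ?thesis unfolding filterlim_at_top
  proof
    fix M :: real
    define M' where "M' = max M 0"
    define T0 where "T0 = max M' (1 + 2 * (1 + M' * f 0) / fK) + 1"
    show "\<forall>\<^sub>F t in at_top. M \<le> s t"
      unfolding eventually_at_top_linorder
    proof (intro exI[of _ T0] allI impI)
      fix t assume t: "T0 \<le> t"
      have M': "M' \<ge> 0" "M \<le> M'" "M' \<le> t" using t unfolding T0_def M'_def by auto
      have t0: "t \<ge> 0" using M' by simp
      show "M \<le> s t"
      proof (rule ccontr)
        assume "\<not> ?thesis" hence lt: "s t < M'" using M' by simp
        have "integral {s t..M'} (\<lambda>\<sigma>. f (Z \<sigma>)) + integral {M'..t} (\<lambda>\<sigma>. f (Z \<sigma>))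
               = integral {s t..t} (\<lambda>\<sigma>. f (Z \<sigma>))"
          using lt M' by (intro int_combine hc) auto
        moreover have "integral {0..M'} (\<lambda>\<sigma>. f (Z \<sigma>)) + integral {M'..t} (\<lambda>\<sigma>. f (Z \<sigma>))
               = integral {0..t} (\<lambda>\<sigma>. f (Z \<sigma>))"
          using M' by (intro int_combine hc) auto
        moreover have "integral {s t..M'} (\<lambda>\<sigma>. f (Z \<sigma>)) \<ge> 0"
          using hc hpos by (intro int_nonneg) (auto intro: less_imp_le)
        moreover have "integral {0..M'} (\<lambda>\<sigma>. f (Z \<sigma>)) \<le> f 0 * (M' - 0)"
          using M' Znon fdec by (intro int_upper hc) auto
        moreover have "integral {0..t} (\<lambda>\<sigma>. f (Z \<sigma>)) \<ge> fK * (t - 1) / 2" by (rule lowint[OF t0])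
        moreover have "fK * (t - 1) / 2 > 1 + M' * f 0"
        proof -
          have "t - 1 > 2 * (1 + M' * f 0) / fK" using t unfolding T0_def by simp
          hence "fK * (t - 1) > fK * (2 * (1 + M' * f 0) / fK)" using fK by (intro mult_strict_left_mono) auto
          moreover have "fK * (2 * (1 + M' * f 0) / fK) = 2 * (1 + M' * f 0)" using fK by simp
          ultimately have "2 * (1 + M' * f 0) < fK * (t - 1)" by linarith
          thus ?thesis by (simp add: field_simps)
        qed
        ultimately show False using st[OF t0] by (simp add: algebra_simps)
      qed
    qed
  qed
qed




theorem lemma4p1:
  fixes n :: nat and \<alpha> :: real
    and muA muJ \<beta> \<tau>0 :: "nat \<Rightarrow> real" and \<zeta> :: "nat \<Rightarrow> nat \<Rightarrow> real"
    and f \<phi> A \<tau> :: "nat \<Rightarrow> real \<Rightarrow> real"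
  assumes "\<alpha> > 0"
    and "assumptionA n muA muJ \<beta> \<zeta> f"
    and "\<forall>i<n. \<phi> i \<in> X_alpha \<alpha> \<and> (\<forall>t\<le>0. \<phi> i t \<ge> 0) \<and> \<tau>0 i \<ge> 0"
    and "\<forall>i<n. integral {- \<tau>0 i..0} (\<lambda>\<sigma>. f i (Zfun n \<zeta> \<phi> i \<sigma>)) = 1"
    and "is_solution n muA muJ \<beta> \<zeta> f \<phi> \<tau>0 A \<tau>"
  shows "\<forall>i<n. filterlim (\<lambda>t. t - \<tau> i t) at_top at_top"
proof -
  note AA = assms(2)[unfolded assumptionA_def]
  note SS = assms(5)[unfolded is_solution_def]
  have zeta: "\<And>i j. i < n \<Longrightarrow> j < n \<Longrightarrow> \<zeta> i j \<ge> 0" using AA by auto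
  have Acont: "\<And>j. j < n \<Longrightarrow> continuous_on UNIV (A j)" using SS by auto
  have Anon: "\<And>j t. j < n \<Longrightarrow> A j t \<ge> 0" using SS by auto
  have Aphi: "\<And>j t. j < n \<Longrightarrow> t \<le> 0 \<Longrightarrow> A j t = \<phi> j t" using SS by auto
  have tau0: "\<And>j. j < n \<Longrightarrow> \<tau>0 j \<ge> 0" using assms(3) by auto
  have taunon: "\<And>j t. j < n \<Longrightarrow> t \<ge> 0 \<Longrightarrow> \<tau> j t \<ge> 0" using SS by auto
  have Ader0: "\<And>j t. j < n \<Longrightarrow> t \<ge> 0 \<Longrightarrow> (A j has_real_derivative
             (- muA j * A j t + \<beta> j * exp (- muJ j * \<tau> j t) *
                (f j (Zfun n \<zeta> A j t) / f j (Zfun n \<zeta> A j (t - \<tau> j t))) * A j (t - \<tau> j t)))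
           (at t within {0..})" using SS by auto
  have inteq: "\<And>j t. j < n \<Longrightarrow> t \<ge> 0 \<Longrightarrow> integral {t - \<tau> j t..t} (\<lambda>\<sigma>. f j (Zfun n \<zeta> A j \<sigma>)) =
                 integral {- \<tau>0 j..0} (\<lambda>\<sigma>. f j (Zfun n \<zeta> \<phi> j \<sigma>))" using SS by auto
  have cst: "\<And>j. j < n \<Longrightarrow> muA j > 0 \<and> muJ j > 0 \<and> \<beta> j > 0 \<and> \<zeta> j j > 0" using AA by auto
  have fpos: "\<And>j x. j < n \<Longrightarrow> f j x > 0" using AA by auto
  have flim: "\<And>j. j < n \<Longrightarrow> (f j \<longlongrightarrow> 0) at_top" using AA by auto
  have fder: "\<And>j. j < n \<Longrightarrow> \<exists>f'. (\<forall>x. (f j has_real_derivative f' x) (at x)) \<and> (\<forall>x. f' x \<le> 0)"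
    using AA by blast
  have fcont: "continuous_on UNIV (f j)" if j: "j < n" for j
  proof -
    obtain f' where "\<forall>x. (f j has_real_derivative f' x) (at x)" using fder[OF j] by blast
    thus ?thesis by (intro continuous_at_imp_continuous_on ballI) (auto intro: DERIV_isCont)
  qed
  have fdec: "f j y \<le> f j x" if j: "j < n" and xy: "x \<le> y" for j x y
  proof -
    obtain f' where f': "\<forall>x. (f j has_real_derivative f' x) (at x)" "\<forall>x. f' x \<le> 0"
      using fder[OF j] by blast
    show ?thesis
      by (rule DERIV_nonpos_imp_decreasing_open[OF xy])
         (use f' fcont[OF j] in \<open>auto intro: continuous_on_subset\<close>)
  qed
  have Zc: "continuous_on UNIV (Zfun n \<zeta> A j)" for j
    unfolding Zfun_def[abs_def] by (intro continuous_on_sum continuous_on_mult_left) (auto intro: Acont)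
  have Znon: "Zfun n \<zeta> A j \<sigma> \<ge> 0" if "j < n" for j \<sigma>
    unfolding Zfun_def using that zeta Anon by (intro sum_nonneg mult_nonneg_nonneg) auto
  have ZA: "Zfun n \<zeta> A j \<sigma> \<ge> \<zeta> j j * A j \<sigma>" if j: "j < n" for j \<sigma>
    unfolding Zfun_def
    by (rule member_le_sum[where f="\<lambda>k. \<zeta> j k * A k \<sigma>"]) (use j zeta Anon in auto)
  have hc: "continuous_on UNIV (\<lambda>\<sigma>. f j (Zfun n \<zeta> A j \<sigma>))" if j: "j < n" for j
    by (rule continuous_on_compose2[OF fcont[OF j] Zc]) auto
  have int0: "integral {- \<tau>0 j..0} (\<lambda>\<sigma>. f j (Zfun n \<zeta> A j \<sigma>)) = 1" if j: "j < n" for j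
  proof -
    have "integral {- \<tau>0 j..0} (\<lambda>\<sigma>. f j (Zfun n \<zeta> A j \<sigma>))
        = integral {- \<tau>0 j..0} (\<lambda>\<sigma>. f j (Zfun n \<zeta> \<phi> j \<sigma>))"
      by (intro integral_cong) (auto simp: Zfun_def Aphi)
    thus ?thesis using assms(4) j by simp
  qed
  have st: "t - \<tau> j t \<le> t \<and> integral {t - \<tau> j t..t} (\<lambda>\<sigma>. f j (Zfun n \<zeta> A j \<sigma>)) = 1"
    if j: "j < n" and t: "t \<ge> 0" for j t
    using inteq[OF j t] assms(4) j taunon[OF j t] by auto
  have Cbound: "\<exists>C. \<forall>T\<ge>0. integral {0..T} (A j) \<le> C * (1 + T)" if j: "j < n" for j
  proof -
    define h where "h = (\<lambda>\<sigma>. f j (Zfun n \<zeta> A j \<sigma>))"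
    define s where "s = (\<lambda>t. t - \<tau> j t)"
    have hpos: "\<And>x. h x > 0" unfolding h_def using fpos[OF j] by simp
    have st': "\<And>t. t \<ge> 0 \<Longrightarrow> s t \<le> t \<and> integral {s t..t} h = 1"
      unfolding s_def h_def using st[OF j] by blast
    have hc': "continuous_on UNIV h" unfolding h_def by (rule hc[OF j])
    have DF: "\<And>t. t \<ge> 0 \<Longrightarrow> s t \<ge> - \<tau>0 j"
      "\<And>T. continuous_on {0..T} s"
      "\<And>t. t > 0 \<Longrightarrow> DERIV s t :> h t / h (s t)"
      using delay_facts[OF hc' hpos tau0[OF j] _ st'] int0[OF j] unfolding h_def by auto
    have c: "muA j > 0" "muJ j > 0" "\<beta> j > 0" "\<zeta> j j > 0" using cst[OF j] by auto
    have Ader: "DERIV (A j) t :> (- muA j * A j t + \<beta> j * exp (- muJ j * (t - s t)) * (h t / h (s t)) * A j (s t))"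
      if t: "t > 0" for t
    proof -
      have "at t within {0..} = at t" using t by (intro at_within_open_subset[where S="{0<..}"]) auto
      thus ?thesis using Ader0[OF j, of t] t unfolding s_def h_def by simp
    qed
    have Ad: "\<exists>d. DERIV (A j) t :> d \<and> d \<ge> - muA j * A j t" if t: "t > 0" for t
    proof (intro exI conjI)
      show "DERIV (A j) t :> (- muA j * A j t + \<beta> j * exp (- muJ j * (t - s t)) * (h t / h (s t)) * A j (s t))"
        by (rule Ader[OF t])
      have "\<beta> j * exp (- muJ j * (t - s t)) * (h t / h (s t)) * A j (s t) \<ge> 0"
        using c hpos[of t] hpos[of "s t"] Anon[OF j, of "s t"]
        by (intro mult_nonneg_nonneg) (auto simp: less_imp_le)
      thus "- muA j * A j t \<le> - muA j * A j t + \<beta> j * exp (- muJ j * (t - s t)) * (h t / h (s t)) * A j (s t)"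
        by linarith
    qed
    have st2: "\<And>t. t \<ge> 0 \<Longrightarrow> - \<tau>0 j \<le> s t \<and> s t \<le> t \<and> integral {s t..t} (\<lambda>\<sigma>. f j (Zfun n \<zeta> A j \<sigma>)) = 1"
      using st' DF(1) unfolding h_def by auto
    obtain a where a: "a \<ge> 0" "\<And>t. t \<ge> 0 \<Longrightarrow> a \<le> A j (s t) \<Longrightarrow> \<beta> j * exp (- muJ j * (t - s t)) \<le> muA j / 2"
      using threshold[where f="f j" and Z="Zfun n \<zeta> A j" and zz="\<zeta> j j" and A="A j" and \<mu>="muA j"
          and s=s and r="\<tau>0 j" and \<beta>="\<beta> j" and \<mu>J="muJ j",
          OF hc[OF j] flim[OF j] c(4) ZA[OF j] Acont[OF j] Anon[OF j] Ad st2 c(1) c(3) c(2)]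
      by blast
    show ?thesis
      by (rule integral_growth[OF Acont[OF j] Anon[OF j] tau0[OF j] _ DF(2) DF(3) hpos Ader a(2) c(1) c(3) a(1)])
         (use DF(1) st' c(2) in \<open>auto simp: less_imp_le\<close>)
  qed
  have "\<forall>j. \<exists>C. j < n \<longrightarrow> (\<forall>T\<ge>0. integral {0..T} (A j) \<le> C * (1 + T))"
    using Cbound by blast
  then obtain Cf where Cf: "\<And>j T. j < n \<Longrightarrow> T \<ge> 0 \<Longrightarrow> integral {0..T} (A j) \<le> Cf j * (1 + T)"
    by metis
  show ?thesis
  proof (intro allI impI)
    fix i assume i: "i < n"
    show "filterlim (\<lambda>t. t - \<tau> i t) at_top at_top"
    proof (rule final_step[where f="f i" and Z="Zfun n \<zeta> A i" and C="\<Sum>k<n. \<zeta> i k * Cf k"])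
      show "\<And>x y. x \<le> y \<Longrightarrow> f i y \<le> f i x" by (rule fdec[OF i])
      show "\<And>x. f i x > 0" by (rule fpos[OF i])
      show "continuous_on UNIV (\<lambda>\<sigma>. f i (Zfun n \<zeta> A i \<sigma>))" by (rule hc[OF i])
      show "continuous_on UNIV (Zfun n \<zeta> A i)" by (rule Zc)
      show "\<And>x. Zfun n \<zeta> A i x \<ge> 0" by (rule Znon[OF i])
      show "\<And>t. t \<ge> 0 \<Longrightarrow> t - \<tau> i t \<le> t \<and> integral {t - \<tau> i t..t} (\<lambda>\<sigma>. f i (Zfun n \<zeta> A i \<sigma>)) = 1"
        by (rule st[OF i])
      fix T :: real assume T: "T \<ge> 0"
      have Ai: "\<And>k. k \<in> {..<n} \<Longrightarrow> (\<lambda>x. \<zeta> i k * A k x) integrable_on {0..T}"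
        by (intro integrable_continuous_interval continuous_on_mult_left continuous_on_subset[OF Acont]) auto
      have "integral {0..T} (Zfun n \<zeta> A i) = (\<Sum>k<n. integral {0..T} (\<lambda>x. \<zeta> i k * A k x))"
        unfolding Zfun_def[abs_def] by (rule integral_sum) (use Ai in auto)
      also have "\<dots> = (\<Sum>k<n. \<zeta> i k * integral {0..T} (A k))"
        by (intro sum.cong refl integral_mult_right)
      also have "\<dots> \<le> (\<Sum>k<n. \<zeta> i k * (Cf k * (1 + T)))"
        by (intro sum_mono mult_left_mono Cf T) (use zeta i in auto)
      also have "\<dots> = (\<Sum>k<n. \<zeta> i k * Cf k) * (1 + T)"
        by (simp add: sum_distrib_right mult.assoc)
      finally show "integral {0..T} (Zfun n \<zeta> A i) \<le> (\<Sum>k<n. \<zeta> i k * Cf k) * (1 + T)" .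
    qed
  qed
qed


end
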